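(* Let $q:V\to\overline K/\overline R$ be a non-trivial generalized $(\sigma,\varepsilon)$-quadratic form with sesquilinearization $f$ such that $P_q$ spans $\mathrm{PG}(V)$, and let $U\subseteq\mathrm{Rad}(f)$ be a subspace with $U\cap\mathrm{Rad}(q)=\{0\}$. Then $q_U:V/U\to\overline K/\overline R_U$ is a well-defined generalized $(\sigma,\varepsilon)$-quadratic form with sesquilinearization $f_U$, and, with $\pi_U:V\to V/U$ the projection: (1) if $q_U$ is non-trivial, $\pi_U$ induces an isomorphism of point-line geometries from $S_q$ onto $S_{q_U}$; (2) if $q_U$ is trivial, then both $f$ and $f_U$ are alternating and $\pi_U$ induces an isomorphism from $S_q$ onto the polar space $S_{f_U}$.
   Context: $K$ division ring, $(\sigma,\varepsilon)$ admissible pair ($\sigma$ anti-automorphism, $\varepsilon^\sigma\varepsilon=1$, $t^{\sigma^2}=\varepsilon t\varepsilon^{-1}$). $K_{\sigma,\varepsilon}=\{t-t^\sigma\varepsilon\}$, $K^{\sigma,\varepsilon}=\{t:t=-t^\sigma\varepsilon\}$, $\overline K=K/K_{\sigma,\varepsilon}$, $\bar t$ class of $t$, $\bar t\circ\lambda=\overline{\lambda^\sigma t\lambda}$, $\overline K^\circ=K^{\sigma,\varepsilon}/K_{\sigma,\varepsilon}$ (a right $K$-vector space under $\circ$); closed subgroups: stable under all $\circ\lambda$; $(\bar t+\overline R)\circ\lambda=\bar t\circ\lambda+\overline R$. Generalized $(\sigma,\varepsilon)$-quadratic form with co-defect closed $\overline R$: $q:V\to\overline K/\overline R$ ($V$ right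 $K$-vector space) with $q(x\lambda)=q(x)\circ\lambda$ and trace-valued $(\sigma,\varepsilon)$-sesquilinear $f$ ($f(x\lambda,y\mu)=\lambda^\sigma f(x,y)\mu$, $f(y,x)=f(x,y)^\sigma\varepsilon$, $f(x,x)\in\{t+t^\sigma\varepsilon\}$) with $q(x+y)=q(x)+q(y)+(\overline{f(x,y)}+\overline R)$. For non-trivial $q$, $\overline R$ is a subspace of $\overline K^\circ$ and $q$ restricted to $\mathrm{Rad}(f)=\{x:f(x,V)=0\}$ is $K$-linear into $\overline K^\circ/\overline R$ with kernel $\mathrm{Rad}(q)=\{x\in\mathrm{Rad}(f):q(x)=\overline R\}$. Given $U$ as in the claim, $\overline R_U$ is the unique subspace of $\overline K^\circ$ containing $\overline R$ with $\overline R_U/\overline R=q(U)$; $q_U(x+U)=\bar t+\overline R_U$ where $\bar t+\overline R=q(x)$; $f_U(x+U,y+U)=f(x,y)$. Trivial: identically zero in the quotient. $S_q$ ($S_{q_U}$): points of the projective space represented by singular vectors and lines all of whose points are singular; $S_{f_U}$: points $[v]$ with $f_U(v,v)=0$ and lines on which $f_U$ vanishes identically. Alternating: $f(x,x)=0$ for all $x$. *)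

theory Defs
  imports Main
begin

definition anti_automorphism :: "('k::division_ring \<Rightarrow> 'k) \<Rightarrow> bool" where
  "anti_automorphism \<sigma> \<longleftrightarrow> bij \<sigma> \<and> (\<forall>a b. \<sigma> (a + b) = \<sigma> a + \<sigma> b) \<and>
     (\<forall>a b. \<sigma> (a * b) = \<sigma> b * \<sigma> a)"

definition admissible :: "('k::division_ring \<Rightarrow> 'k) \<Rightarrow> 'k \<Rightarrow> bool" where
  "admissible \<sigma> \<epsilon> \<longleftrightarrow> anti_automorphism \<sigma> \<and> \<sigma> \<epsilon> * \<epsilon> = 1 \<and>
     (\<forall>t. \<sigma> (\<sigma> t) = \<epsilon> * t * inverse \<epsilon>)"

definition Kse :: "('k::division_ring \<Rightarrow> 'k) \<Rightarrow> 'k \<Rightarrow> 'k set" where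
  "Kse \<sigma> \<epsilon> = {t - \<sigma> t * \<epsilon> | t. True}"

definition Kfix :: "('k::division_ring \<Rightarrow> 'k) \<Rightarrow> 'k \<Rightarrow> 'k set" where
  "Kfix \<sigma> \<epsilon> = {t. t = - (\<sigma> t * \<epsilon>)}"

text \<open>A subgroup of Kbar = K/K_{sigma,eps} is represented by its preimage R in K
  (an additive subgroup of K containing K_{sigma,eps}); it is closed iff stable under
  t \<mapsto> lambda^sigma t lambda.  Elements of Kbar/Rbar are represented as cosets t + R.\<close>
definition closed_sub :: "('k::division_ring \<Rightarrow> 'k) \<Rightarrow> 'k \<Rightarrow> 'k set \<Rightarrow> bool" where
  "closed_sub \<sigma> \<epsilon> R \<longleftrightarrow> 0 \<in> R \<and> (\<forall>a\<in>R. \<forall>b\<in>R. a + b \<in> R) \<and> (\<forall>a\<in>R. - a \<in> R) \<and>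
     Kse \<sigma> \<epsilon> \<subseteq> R \<and> (\<forall>t\<in>R. \<forall>l. \<sigma> l * t * l \<in> R)"

definition cos :: "'k::division_ring set \<Rightarrow> 'k \<Rightarrow> 'k set" where
  "cos R t = (\<lambda>r. t + r) ` R"

section \<open>Right vector spaces (carrier based, so quotients can be formed)\<close>

record ('v, 'k) vs =
  vcarrier :: "'v set"
  vadd :: "'v \<Rightarrow> 'v \<Rightarrow> 'v"
  vzero :: 'v
  vsmul :: "'v \<Rightarrow> 'k \<Rightarrow> 'v"

definition rvs :: "('v, 'k::division_ring) vs \<Rightarrow> bool" where
  "rvs W \<longleftrightarrow>
    (let C = vcarrier W; ad = vadd W; z = vzero W; sm = vsmul W in
      z \<in> C \<and> (\<forall>x\<in>C. \<forall>y\<in>C. ad x y \<in> C) \<and> (\<forall>x\<in>C. \<forall>a. sm x a \<in> C) \<and>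
      (\<forall>x\<in>C. \<forall>y\<in>C. \<forall>w\<in>C. ad (ad x y) w = ad x (ad y w)) \<and>
      (\<forall>x\<in>C. \<forall>y\<in>C. ad x y = ad y x) \<and>
      (\<forall>x\<in>C. ad z x = x) \<and>
      (\<forall>x\<in>C. \<exists>y\<in>C. ad x y = z) \<and>
      (\<forall>x\<in>C. \<forall>a b. sm x (a + b) = ad (sm x a) (sm x b)) \<and>
      (\<forall>x\<in>C. \<forall>y\<in>C. \<forall>a. sm (ad x y) a = ad (sm x a) (sm y a)) \<and>
      (\<forall>x\<in>C. \<forall>a b. sm (sm x a) b = sm x (a * b)) \<and>
      (\<forall>x\<in>C. sm x 1 = x))"

definition subspace :: "('v, 'k::division_ring) vs \<Rightarrow> 'v set \<Rightarrow> bool" where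
  "subspace W X \<longleftrightarrow> X \<subseteq> vcarrier W \<and> vzero W \<in> X \<and>
     (\<forall>x\<in>X. \<forall>y\<in>X. vadd W x y \<in> X) \<and> (\<forall>x\<in>X. \<forall>a. vsmul W x a \<in> X)"

definition span :: "('v, 'k::division_ring) vs \<Rightarrow> 'v set \<Rightarrow> 'v set" where
  "span W S = \<Inter> {X. subspace W X \<and> S \<subseteq> X}"

definition points :: "('v, 'k::division_ring) vs \<Rightarrow> 'v set set" where
  "points W = {span W {x} | x. x \<in> vcarrier W \<and> x \<noteq> vzero W}"

definition lines :: "('v, 'k::division_ring) vs \<Rightarrow> 'v set set" where
  "lines W = {span W {x, y} | x y. x \<in> vcarrier W \<and> y \<in> vcarrier W \<and>
                 x \<noteq> vzero W \<and> y \<notin> span W {x}}"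

definition trace_valued_sesq ::
  "('v, 'k::division_ring) vs \<Rightarrow> ('k \<Rightarrow> 'k) \<Rightarrow> 'k \<Rightarrow> ('v \<Rightarrow> 'v \<Rightarrow> 'k) \<Rightarrow> bool" where
  "trace_valued_sesq W \<sigma> \<epsilon> f \<longleftrightarrow>
    (let C = vcarrier W in
     (\<forall>x\<in>C. \<forall>y\<in>C. \<forall>z\<in>C. f (vadd W x y) z = f x z + f y z) \<and>
     (\<forall>x\<in>C. \<forall>y\<in>C. \<forall>z\<in>C. f x (vadd W y z) = f x y + f x z) \<and>
     (\<forall>x\<in>C. \<forall>y\<in>C. \<forall>a b. f (vsmul W x a) (vsmul W y b) = \<sigma> a * f x y * b) \<and>
     (\<forall>x\<in>C. \<forall>y\<in>C. f y x = \<sigma> (f x y) * \<epsilon>) \<and>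
     (\<forall>x\<in>C. \<exists>t. f x x = t + \<sigma> t * \<epsilon>))"

text \<open>Generalized (sigma,eps)-quadratic form q : V -> Kbar/Rbar with co-defect the closed
  subgroup represented by R, and sesquilinearization f.\<close>
definition gen_quad_form ::
  "('v, 'k::division_ring) vs \<Rightarrow> ('k \<Rightarrow> 'k) \<Rightarrow> 'k \<Rightarrow> 'k set \<Rightarrow> ('v \<Rightarrow> 'k set)
     \<Rightarrow> ('v \<Rightarrow> 'v \<Rightarrow> 'k) \<Rightarrow> bool" where
  "gen_quad_form W \<sigma> \<epsilon> R q f \<longleftrightarrow>
    rvs W \<and> admissible \<sigma> \<epsilon> \<and> closed_sub \<sigma> \<epsilon> R \<and> trace_valued_sesq W \<sigma> \<epsilon> f \<and>
    (\<forall>x\<in>vcarrier W. \<exists>t. q x = cos R t) \<and>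
    (\<forall>x\<in>vcarrier W. \<forall>l. \<forall>t\<in>q x. q (vsmul W x l) = cos R (\<sigma> l * t * l)) \<and>
    (\<forall>x\<in>vcarrier W. \<forall>y\<in>vcarrier W. \<forall>t\<in>q x. \<forall>s\<in>q y.
        q (vadd W x y) = cos R (t + s + f x y))"

definition qtrivial :: "('v, 'k) vs \<Rightarrow> 'k set \<Rightarrow> ('v \<Rightarrow> 'k set) \<Rightarrow> bool" where
  "qtrivial W R q \<longleftrightarrow> (\<forall>x\<in>vcarrier W. q x = R)"

definition alternating :: "('v, 'k::division_ring) vs \<Rightarrow> ('v \<Rightarrow> 'v \<Rightarrow> 'k) \<Rightarrow> bool" where
  "alternating W f \<longleftrightarrow> (\<forall>x\<in>vcarrier W. f x x = 0)"

definition Radf :: "('v, 'k::division_ring) vs \<Rightarrow> ('v \<Rightarrow> 'v \<Rightarrow> 'k) \<Rightarrow> 'v set" where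
  "Radf W f = {x \<in> vcarrier W. \<forall>y\<in>vcarrier W. f x y = 0}"

definition Radq :: "('v, 'k::division_ring) vs \<Rightarrow> 'k set \<Rightarrow> ('v \<Rightarrow> 'k set)
     \<Rightarrow> ('v \<Rightarrow> 'v \<Rightarrow> 'k) \<Rightarrow> 'v set" where
  "Radq W R q f = {x \<in> Radf W f. q x = R}"

definition sing_points :: "('v, 'k::division_ring) vs \<Rightarrow> 'k set \<Rightarrow> ('v \<Rightarrow> 'k set) \<Rightarrow> 'v set set" where
  "sing_points W R q = {span W {x} | x. x \<in> vcarrier W \<and> x \<noteq> vzero W \<and> q x = R}"

definition sing_lines :: "('v, 'k::division_ring) vs \<Rightarrow> 'k set \<Rightarrow> ('v \<Rightarrow> 'k set) \<Rightarrow> 'v set set" where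
  "sing_lines W R q = {L \<in> lines W. \<forall>p\<in>points W. p \<subseteq> L \<longrightarrow> p \<in> sing_points W R q}"

definition S_q :: "('v, 'k::division_ring) vs \<Rightarrow> 'k set \<Rightarrow> ('v \<Rightarrow> 'k set) \<Rightarrow> 'v set set \<times> 'v set set" where
  "S_q W R q = (sing_points W R q, sing_lines W R q)"

definition S_f :: "('v, 'k::division_ring) vs \<Rightarrow> ('v \<Rightarrow> 'v \<Rightarrow> 'k) \<Rightarrow> 'v set set \<times> 'v set set" where
  "S_f W f = ({span W {v} | v. v \<in> vcarrier W \<and> v \<noteq> vzero W \<and> f v v = 0},
              {L \<in> lines W. \<forall>x\<in>L. \<forall>y\<in>L. f x y = 0})"

text \<open>An isomorphism of point-line geometries (incidence = containment) given by a map phi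
  on subspaces.\<close>
definition geom_iso :: "('a set \<Rightarrow> 'b set) \<Rightarrow> 'a set set \<times> 'a set set \<Rightarrow> 'b set set \<times> 'b set set \<Rightarrow> bool" where
  "geom_iso \<phi> G H \<longleftrightarrow> bij_betw \<phi> (fst G) (fst H) \<and> bij_betw \<phi> (snd G) (snd H) \<and>
     (\<forall>p\<in>fst G. \<forall>L\<in>snd G. p \<subseteq> L \<longleftrightarrow> \<phi> p \<subseteq> \<phi> L)"

definition coset :: "('v, 'k) vs \<Rightarrow> 'v set \<Rightarrow> 'v \<Rightarrow> 'v set" where
  "coset W U x = (\<lambda>u. vadd W x u) ` U"

definition quot :: "('v, 'k) vs \<Rightarrow> 'v set \<Rightarrow> ('v set, 'k) vs" where
  "quot W U = \<lparr> vcarrier = coset W U ` vcarrier W,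
               vadd = (\<lambda>C D. {vadd W c d | c d. c \<in> C \<and> d \<in> D}),
               vzero = U,
               vsmul = (\<lambda>C a. {vadd W (vsmul W c a) u | c u. c \<in> C \<and> u \<in> U}) \<rparr>"

text \<open>Rbar_U represented by its preimage in K: the union of the cosets q(u), u in U.\<close>
definition R_U :: "'v set \<Rightarrow> ('v \<Rightarrow> 'k set) \<Rightarrow> 'k set" where
  "R_U U q = \<Union> (q ` U)"

definition q_U :: "'v set \<Rightarrow> ('v \<Rightarrow> 'k::division_ring set) \<Rightarrow> 'v set \<Rightarrow> 'k set" where
  "q_U U q C = cos (R_U U q) (SOME t. \<exists>x\<in>C. t \<in> q x)"

definition f_U :: "('v \<Rightarrow> 'v \<Rightarrow> 'k) \<Rightarrow> 'v set \<Rightarrow> 'v set \<Rightarrow> 'k" where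
  "f_U f C D = f (SOME x. x \<in> C) (SOME y. y \<in> D)"

end

theory Submission imports Defs begin

locale RV = fixes W :: "('v, 'k::division_ring) vs" assumes rvs: "rvs W"
begin
abbreviation "CC \<equiv> vcarrier W"
abbreviation "ad \<equiv> vadd W"
abbreviation "zz \<equiv> vzero W"
abbreviation "sm \<equiv> vsmul W"

lemma zero_in[simp]: "zz \<in> CC" using rvs unfolding rvs_def Let_def by auto
lemma add_in[simp]: "x \<in> CC \<Longrightarrow> y \<in> CC \<Longrightarrow> ad x y \<in> CC" using rvs unfolding rvs_def Let_def by auto
lemma sm_in[simp]: "x \<in> CC \<Longrightarrow> sm x a \<in> CC" using rvs unfolding rvs_def Let_def by auto
lemma assoc: "x \<in> CC \<Longrightarrow> y \<in> CC \<Longrightarrow> w \<in> CC \<Longrightarrow> ad (ad x y) w = ad x (ad y w)" using rvs unfolding rvs_def Let_def by auto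
lemma comm: "x \<in> CC \<Longrightarrow> y \<in> CC \<Longrightarrow> ad x y = ad y x" using rvs unfolding rvs_def Let_def by auto
lemma zero_l[simp]: "x \<in> CC \<Longrightarrow> ad zz x = x" using rvs unfolding rvs_def Let_def by auto
lemma inv_ex: "x \<in> CC \<Longrightarrow> \<exists>y\<in>CC. ad x y = zz" using rvs unfolding rvs_def Let_def by meson
lemma distr_s: "x \<in> CC \<Longrightarrow> sm x (a + b) = ad (sm x a) (sm x b)" using rvs unfolding rvs_def Let_def by auto
lemma distr_v: "x \<in> CC \<Longrightarrow> y \<in> CC \<Longrightarrow> sm (ad x y) a = ad (sm x a) (sm y a)" using rvs unfolding rvs_def Let_def by auto
lemma sm_sm[simp]: "x \<in> CC \<Longrightarrow> sm (sm x a) b = sm x (a * b)" using rvs unfolding rvs_def Let_def by auto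
lemma sm_one[simp]: "x \<in> CC \<Longrightarrow> sm x 1 = x" using rvs unfolding rvs_def Let_def by auto

lemma zero_r[simp]: "x \<in> CC \<Longrightarrow> ad x zz = x" using comm zero_l zero_in by metis

lemma cancel_l: assumes "x \<in> CC" "y \<in> CC" "w \<in> CC" "ad x y = ad x w" shows "y = w"
proof -
  obtain n where n: "n \<in> CC" "ad x n = zz" using inv_ex assms by blast
  have "ad n (ad x y) = ad n (ad x w)" using assms by simp
  hence "ad (ad n x) y = ad (ad n x) w" using assoc assms n by simp
  moreover have "ad n x = zz" using n comm assms by metis
  ultimately show ?thesis using assms by simp
qed

lemma sm_zero_s[simp]: assumes "x \<in> CC" shows "sm x 0 = zz"
proof -
  have "ad (sm x 0) (sm x 0) = ad (sm x 0) zz" using distr_s[OF assms, of 0 0] assms by simp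
  thus ?thesis using cancel_l assms by (metis sm_in zero_in)
qed

lemma sm_zero_v[simp]: "sm zz a = zz"
  by (metis mult_zero_left sm_sm sm_zero_s zero_in)

lemma neg_r: "x \<in> CC \<Longrightarrow> ad x (sm x (-1)) = zz"
  by (metis distr_s sm_one sm_zero_s add.right_inverse)

lemma neg_l: "x \<in> CC \<Longrightarrow> ad (sm x (-1)) x = zz"
  by (metis comm neg_r sm_in)

lemma add_sm_same: "x \<in> CC \<Longrightarrow> ad (sm x a) (sm x b) = sm x (a + b)" by (simp add: distr_s)

lemma span_char:
  assumes "subspace W S" "T \<subseteq> S" "\<And>X. subspace W X \<Longrightarrow> T \<subseteq> X \<Longrightarrow> S \<subseteq> X"
  shows "span W T = S"
  using assms unfolding span_def by blast

lemma span1: assumes "x \<in> CC" shows "span W {x} = {sm x a | a. True}"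
proof (rule span_char)
  show "subspace W {sm x a | a. True}" unfolding subspace_def using assms
    by (auto simp: add_sm_same intro: exI[of _ 0])
  show "{x} \<subseteq> {sm x a | a. True}" using assms by (auto intro: exI[of _ 1])
  show "{sm x a | a. True} \<subseteq> X" if "subspace W X" "{x} \<subseteq> X" for X
    using that unfolding subspace_def by auto
qed

lemma span2: assumes "x \<in> CC" "y \<in> CC" shows "span W {x, y} = {ad (sm x a) (sm y b) | a b. True}"
proof (rule span_char)
  show "subspace W {ad (sm x a) (sm y b) | a b. True}" unfolding subspace_def
  proof (intro conjI ballI allI)
    show "{ad (sm x a) (sm y b) |a b. True} \<subseteq> CC" using assms by auto
    show "zz \<in> {ad (sm x a) (sm y b) |a b. True}" using assms by (auto intro!: exI[of _ 0])
    fix v w assume "v \<in> {ad (sm x a) (sm y b) |a b. True}" "w \<in> {ad (sm x a) (sm y b) |a b. True}"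
    then obtain a b c d where v: "v = ad (sm x a) (sm y b)" and w: "w = ad (sm x c) (sm y d)" by blast
    have "ad v w = ad (sm x (a + c)) (sm y (b + d))"
      unfolding v w using assms
      by (simp add: distr_s assoc) (metis assoc comm sm_in)
    thus "ad v w \<in> {ad (sm x a) (sm y b) |a b. True}" by blast
    fix e
    have "sm v e = ad (sm x (a * e)) (sm y (b * e))" unfolding v using assms by (simp add: distr_v)
    thus "sm v e \<in> {ad (sm x a) (sm y b) |a b. True}" by blast
  qed
  have "x = ad (sm x 1) (sm y 0)" "y = ad (sm x 0) (sm y 1)" using assms by auto
  thus "{x, y} \<subseteq> {ad (sm x a) (sm y b) | a b. True}" by blast
  show "{ad (sm x a) (sm y b) | a b. True} \<subseteq> X" if "subspace W X" "{x, y} \<subseteq> X" for X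
    using that unfolding subspace_def by auto
qed


lemma CC_subspace: "subspace W CC" unfolding subspace_def by auto

lemma span_sub: assumes "T \<subseteq> CC" shows "subspace W (span W T)"
proof -
  let ?F = "{X. subspace W X \<and> T \<subseteq> X}"
  have ne: "CC \<in> ?F" using CC_subspace assms by blast
  have "\<Inter> ?F \<subseteq> CC" using ne by blast
  moreover have "zz \<in> \<Inter> ?F" by (auto simp: subspace_def)
  moreover have "\<forall>x\<in>\<Inter> ?F. \<forall>y\<in>\<Inter> ?F. ad x y \<in> \<Inter> ?F"
    by (auto simp: subspace_def)
  moreover have "\<forall>x\<in>\<Inter> ?F. \<forall>a. sm x a \<in> \<Inter> ?F"
    by (auto simp: subspace_def)
  ultimately show ?thesis unfolding subspace_def span_def by blast
qed

lemma span_least: "subspace W X \<Longrightarrow> T \<subseteq> X \<Longrightarrow> span W T \<subseteq> X"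
  unfolding span_def by blast

lemma span_inc: "T \<subseteq> span W T" unfolding span_def by blast

lemma span1_mem: "x \<in> CC \<Longrightarrow> w \<in> span W {x} \<longleftrightarrow> (\<exists>a. w = sm x a)"
  using span1 by auto

lemma span2_mem: "x \<in> CC \<Longrightarrow> y \<in> CC \<Longrightarrow> w \<in> span W {x, y} \<longleftrightarrow> (\<exists>a b. w = ad (sm x a) (sm y b))"
  using span2 by auto

lemma span_in_CC: "T \<subseteq> CC \<Longrightarrow> span W T \<subseteq> CC"
  using span_sub unfolding subspace_def by blast

lemma points_sub: "P \<in> points W \<Longrightarrow> P \<subseteq> CC"
  proof -
  assume "P \<in> points W"
  then obtain x where "x \<in> CC" "P = span W {x}" unfolding points_def by blast
  thus ?thesis using span_in_CC[of "{x}"] by simp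
qed

lemma lines_sub: "L \<in> lines W \<Longrightarrow> L \<subseteq> CC"
  proof -
  assume "L \<in> lines W"
  then obtain x y where "x \<in> CC" "y \<in> CC" "L = span W {x, y}" unfolding lines_def by blast
  thus ?thesis using span_in_CC[of "{x, y}"] by simp
qed

lemma lines_subspace: "L \<in> lines W \<Longrightarrow> subspace W L"
  proof -
  assume "L \<in> lines W"
  then obtain x y where "x \<in> CC" "y \<in> CC" "L = span W {x, y}" unfolding lines_def by blast
  thus ?thesis using span_sub[of "{x, y}"] by simp
qed

end

locale RVU = RV + fixes U assumes Usub: "subspace W U"
begin
lemma U_C: "U \<subseteq> CC" using Usub unfolding subspace_def by blast
lemma U_z[simp]: "zz \<in> U" using Usub unfolding subspace_def by blast
lemma U_add[simp]: "u \<in> U \<Longrightarrow> v \<in> U \<Longrightarrow> ad u v \<in> U" using Usub unfolding subspace_def by blast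
lemma U_sm[simp]: "u \<in> U \<Longrightarrow> sm u a \<in> U" using Usub unfolding subspace_def by blast
lemma U_in[simp]: "u \<in> U \<Longrightarrow> u \<in> CC" using U_C by blast

lemma coset_self: "x \<in> CC \<Longrightarrow> x \<in> coset W U x"
  unfolding coset_def by (rule image_eqI[of _ _ zz]) auto

lemma coset_sub: "x \<in> CC \<Longrightarrow> coset W U x \<subseteq> CC" unfolding coset_def by auto

lemma coset_shift: assumes "x \<in> CC" "u \<in> U" shows "coset W U (ad x u) = coset W U x"
proof
  show "coset W U (ad x u) \<subseteq> coset W U x" unfolding coset_def using assms
    by (auto simp: assoc)
  show "coset W U x \<subseteq> coset W U (ad x u)" unfolding coset_def
  proof
    fix y assume "y \<in> (\<lambda>v. ad x v) ` U"
    then obtain v where v: "v \<in> U" "y = ad x v" by blast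
    have "ad (ad x u) (ad (sm u (-1)) v) = ad x (ad (ad u (sm u (-1))) v)"
      using assms v by (simp add: assoc)
    also have "\<dots> = y" using assms v by (simp add: neg_r)
    finally show "y \<in> (\<lambda>v. ad (ad x u) v) ` U" using assms v by (metis U_add U_sm image_eqI)
  qed
qed

lemma coset_eq: assumes "x \<in> CC" "y \<in> CC"
  shows "coset W U x = coset W U y \<longleftrightarrow> (\<exists>u\<in>U. x = ad y u)"
proof
  assume "coset W U x = coset W U y"
  hence "x \<in> coset W U y" using coset_self assms by blast
  thus "\<exists>u\<in>U. x = ad y u" unfolding coset_def by blast
next
  assume "\<exists>u\<in>U. x = ad y u"
  thus "coset W U x = coset W U y" using coset_shift assms by blast
qed

lemma coset_zero: "coset W U zz = U" unfolding coset_def by (auto intro: image_eqI)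

lemma coset_is_U: assumes "x \<in> CC" shows "coset W U x = U \<longleftrightarrow> x \<in> U"
  using coset_eq[OF assms zero_in] coset_zero assms by auto

lemma coset_add: assumes "x \<in> CC" "y \<in> CC"
  shows "vadd (quot W U) (coset W U x) (coset W U y) = coset W U (ad x y)"
proof -
  have "{ad c d |c d. c \<in> coset W U x \<and> d \<in> coset W U y} = coset W U (ad x y)"
  proof
    show "{ad c d |c d. c \<in> coset W U x \<and> d \<in> coset W U y} \<subseteq> coset W U (ad x y)"
    proof
      fix w assume "w \<in> {ad c d |c d. c \<in> coset W U x \<and> d \<in> coset W U y}"
      then obtain u v where uv: "u \<in> U" "v \<in> U" "w = ad (ad x u) (ad y v)" unfolding coset_def by blast
      have "w = ad (ad x y) (ad u v)" using uv assms by (simp add: assoc) (metis assoc comm U_in)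
      thus "w \<in> coset W U (ad x y)" unfolding coset_def using uv by auto
    qed
    show "coset W U (ad x y) \<subseteq> {ad c d |c d. c \<in> coset W U x \<and> d \<in> coset W U y}"
    proof
      fix w assume "w \<in> coset W U (ad x y)"
      then obtain u where u: "u \<in> U" "w = ad (ad x y) u" unfolding coset_def by blast
      have "w = ad x (ad y u)" using u assms by (simp add: assoc)
      moreover have "x \<in> coset W U x" using coset_self assms by blast
      moreover have "ad y u \<in> coset W U y" unfolding coset_def using u by blast
      ultimately show "w \<in> {ad c d |c d. c \<in> coset W U x \<and> d \<in> coset W U y}" by blast
    qed
  qed
  thus ?thesis unfolding quot_def by simp
qed

lemma coset_sm: assumes "x \<in> CC"
  shows "vsmul (quot W U) (coset W U x) a = coset W U (sm x a)"
proof -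
  have "{ad (sm c a) u |c u. c \<in> coset W U x \<and> u \<in> U} = coset W U (sm x a)"
  proof
    show "{ad (sm c a) u |c u. c \<in> coset W U x \<and> u \<in> U} \<subseteq> coset W U (sm x a)"
    proof
      fix w assume "w \<in> {ad (sm c a) u |c u. c \<in> coset W U x \<and> u \<in> U}"
      then obtain u v where uv: "u \<in> U" "v \<in> U" "w = ad (sm (ad x u) a) v" unfolding coset_def by blast
      have "w = ad (sm x a) (ad (sm u a) v)" using uv assms by (simp add: assoc distr_v)
      thus "w \<in> coset W U (sm x a)" unfolding coset_def using uv by auto
    qed
    show "coset W U (sm x a) \<subseteq> {ad (sm c a) u |c u. c \<in> coset W U x \<and> u \<in> U}"
      unfolding coset_def using coset_self[OF assms] unfolding coset_def by blast
  qed
  thus ?thesis unfolding quot_def by simp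
qed

lemma quot_carrier[simp]: "vcarrier (quot W U) = coset W U ` CC" unfolding quot_def by simp
lemma quot_zero[simp]: "vzero (quot W U) = U" unfolding quot_def by simp

lemma ball_img: "(\<forall>X\<in>f ` A. P X) \<longleftrightarrow> (\<forall>x\<in>A. P (f x))" by blast
lemma bex_img: "(\<exists>X\<in>f ` A. P X) \<longleftrightarrow> (\<exists>x\<in>A. P (f x))" by blast

lemma rvs_quot: "rvs (quot W U)"
  unfolding rvs_def Let_def quot_carrier quot_zero ball_img
  apply (intro conjI)
  subgoal by (metis coset_zero image_eqI zero_in)
  subgoal by (simp add: coset_add)
  subgoal by (simp add: coset_sm)
  subgoal by (simp add: coset_add assoc)
  subgoal using coset_add comm by metis
  subgoal using coset_add[OF zero_in] coset_zero by simp
  subgoal unfolding bex_img proof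
    fix x assume x: "x \<in> CC"
    have "vadd (quot W U) (coset W U x) (coset W U (sm x (-1))) = U"
      using x coset_add[of x "sm x (-1)"] neg_r coset_zero by simp
    thus "\<exists>y\<in>CC. vadd (quot W U) (coset W U x) (coset W U y) = U" using x sm_in by blast
  qed
  subgoal by (simp add: coset_add coset_sm distr_s)
  subgoal by (simp add: coset_add coset_sm distr_v)
  subgoal by (simp add: coset_sm)
  subgoal by (simp add: coset_sm)  done

end

sublocale RVU \<subseteq> Q: RV "quot W U" by (rule RV.intro, rule rvs_quot)


definition grp :: "'k::ab_group_add set \<Rightarrow> bool" where
  "grp G \<longleftrightarrow> 0 \<in> G \<and> (\<forall>a\<in>G. \<forall>b\<in>G. a + b \<in> G) \<and> (\<forall>a\<in>G. - a \<in> G)"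

lemma grp_diff: "grp G \<Longrightarrow> a \<in> G \<Longrightarrow> b \<in> G \<Longrightarrow> a - b \<in> G"
  unfolding grp_def by (metis diff_conv_add_uminus)

lemma cos_mem_iff: "b \<in> cos G a \<longleftrightarrow> b - a \<in> G"
  unfolding cos_def by (auto intro: image_eqI[of _ _ "b - a"])

lemma cos_eq_iff: assumes "grp G" shows "cos G a = cos G b \<longleftrightarrow> a - b \<in> G"
proof
  assume "cos G a = cos G b"
  moreover have "a \<in> cos G a" using assms unfolding cos_mem_iff grp_def by simp
  ultimately show "a - b \<in> G" by (simp add: cos_mem_iff)
next
  assume h: "a - b \<in> G"
  show "cos G a = cos G b"
  proof (rule set_eqI)
    fix c
    have "c - b = (c - a) + (a - b)" "c - a = (c - b) - (a - b)" by simp_all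
    thus "c \<in> cos G a \<longleftrightarrow> c \<in> cos G b" unfolding cos_mem_iff
      using h assms grp_diff unfolding grp_def by metis
  qed
qed

lemma cos_self: "grp G \<Longrightarrow> a \<in> cos G a" unfolding cos_mem_iff grp_def by simp

lemma cos_mem_eq: "grp G \<Longrightarrow> b \<in> cos G a \<Longrightarrow> cos G b = cos G a"
  by (simp add: cos_eq_iff cos_mem_iff)

lemma cos_zero: "grp G \<Longrightarrow> cos G 0 = G"
  unfolding cos_def by auto

lemma cos_G_iff: "grp G \<Longrightarrow> cos G a = G \<longleftrightarrow> a \<in> G"
  using cos_eq_iff[of G a 0] cos_zero[of G] by simp

lemma cos_UNIV: "cos UNIV a = UNIV" unfolding cos_def
  by (auto intro: image_eqI[of _ _ "x - a" for x])

lemma closed_grp: "closed_sub \<sigma> \<epsilon> R \<Longrightarrow> grp R" unfolding closed_sub_def grp_def by blast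

lemma anti_props:
  assumes "anti_automorphism \<sigma>"
  shows "\<sigma> 0 = 0" "\<sigma> 1 = 1" "\<sigma> (- a) = - \<sigma> a" "\<sigma> (a + b) = \<sigma> a + \<sigma> b" "\<sigma> (a * b) = \<sigma> b * \<sigma> a"
proof -
  have add: "\<And>a b. \<sigma> (a + b) = \<sigma> a + \<sigma> b" and mul: "\<And>a b. \<sigma> (a * b) = \<sigma> b * \<sigma> a"
    using assms unfolding anti_automorphism_def by auto
  show z: "\<sigma> 0 = 0" using add[of 0 0] by simp
  show "\<sigma> (a + b) = \<sigma> a + \<sigma> b" "\<sigma> (a * b) = \<sigma> b * \<sigma> a" by (rule add, rule mul)
  show "\<sigma> (- a) = - \<sigma> a" using add[of a "-a"] z by (simp add: add_eq_0_iff2)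
  have "surj \<sigma>" using assms unfolding anti_automorphism_def bij_def by blast
  then obtain c where c: "\<sigma> c = 1" by (metis surjD)
  have "\<sigma> c = \<sigma> (c * 1)" by simp
  also have "\<dots> = \<sigma> 1 * \<sigma> c" by (rule mul)
  finally show "\<sigma> 1 = 1" using c by simp
qed

lemma zero_if_mult_in: fixes c :: "'k::division_ring" assumes "\<And>b. c * b \<in> G" "G \<noteq> UNIV" shows "c = 0"
proof (rule ccontr)
  assume "c \<noteq> 0"
  have "\<And>k. k \<in> G"
  proof -
    fix k
    have "c * (inverse c * k) = k" using \<open>c \<noteq> 0\<close> by (simp add: mult.assoc[symmetric])
    thus "k \<in> G" using assms(1)[of "inverse c * k"] by simp
  qed
  thus False using assms(2) by blast
qed

locale GQF =
  fixes W :: "('v, 'k::division_ring) vs" and \<sigma> :: "'k \<Rightarrow> 'k" and \<epsilon> :: 'k and R :: "'k set"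
    and q :: "'v \<Rightarrow> 'k set" and f :: "'v \<Rightarrow> 'v \<Rightarrow> 'k"
  assumes gqf: "gen_quad_form W \<sigma> \<epsilon> R q f"
begin

lemma rvsW: "rvs W" using gqf gen_quad_form_def by blast
sublocale RV W by (rule RV.intro, rule rvsW)

lemma adm: "admissible \<sigma> \<epsilon>" using gqf unfolding gen_quad_form_def by blast
lemma anti: "anti_automorphism \<sigma>" using adm unfolding admissible_def by blast
lemma closedR: "closed_sub \<sigma> \<epsilon> R" using gqf unfolding gen_quad_form_def by blast
lemma grpR: "grp R" using closed_grp closedR by blast
lemma tvs: "trace_valued_sesq W \<sigma> \<epsilon> f" using gqf unfolding gen_quad_form_def by blast

lemmas sg = anti_props[OF anti]

lemma q_cos: "x \<in> CC \<Longrightarrow> \<exists>t. q x = cos R t" using gqf unfolding gen_quad_form_def by blast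
lemma q_sm: "x \<in> CC \<Longrightarrow> t \<in> q x \<Longrightarrow> q (sm x l) = cos R (\<sigma> l * t * l)"
  using gqf unfolding gen_quad_form_def by blast
lemma q_add: "x \<in> CC \<Longrightarrow> y \<in> CC \<Longrightarrow> t \<in> q x \<Longrightarrow> s \<in> q y \<Longrightarrow> q (ad x y) = cos R (t + s + f x y)"
  using gqf unfolding gen_quad_form_def by blast

lemma f_addl: "x \<in> CC \<Longrightarrow> y \<in> CC \<Longrightarrow> z \<in> CC \<Longrightarrow> f (ad x y) z = f x z + f y z"
  using tvs unfolding trace_valued_sesq_def Let_def by blast
lemma f_addr: "x \<in> CC \<Longrightarrow> y \<in> CC \<Longrightarrow> z \<in> CC \<Longrightarrow> f x (ad y z) = f x y + f x z"
  using tvs unfolding trace_valued_sesq_def Let_def by blast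
lemma f_sm: "x \<in> CC \<Longrightarrow> y \<in> CC \<Longrightarrow> f (sm x a) (sm y b) = \<sigma> a * f x y * b"
  using tvs unfolding trace_valued_sesq_def Let_def by blast
lemma f_sym: "x \<in> CC \<Longrightarrow> y \<in> CC \<Longrightarrow> f y x = \<sigma> (f x y) * \<epsilon>"
  using tvs unfolding trace_valued_sesq_def Let_def by blast
lemma f_tr: "x \<in> CC \<Longrightarrow> \<exists>t. f x x = t + \<sigma> t * \<epsilon>"
  using tvs unfolding trace_valued_sesq_def Let_def by blast

lemma f_smr: "x \<in> CC \<Longrightarrow> y \<in> CC \<Longrightarrow> f x (sm y b) = f x y * b"
  using f_sm[of x y 1 b] sg by simp
lemma f_sml: "x \<in> CC \<Longrightarrow> y \<in> CC \<Longrightarrow> f (sm x a) y = \<sigma> a * f x y"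
  using f_sm[of x y a 1] by simp

lemma q_mem: "x \<in> CC \<Longrightarrow> t \<in> q x \<Longrightarrow> q x = cos R t"
  using q_cos cos_mem_eq grpR by metis
lemma q_ne: "x \<in> CC \<Longrightarrow> \<exists>t. t \<in> q x"
  using q_cos cos_self grpR by metis
lemma q_R_iff: "x \<in> CC \<Longrightarrow> q x = R \<longleftrightarrow> 0 \<in> q x"
  using q_mem cos_zero grpR grp_def by metis
lemma q_zero: "q zz = R"
proof -
  obtain t where t: "t \<in> q zz" using q_ne zero_in by blast
  have "q (sm zz 0) = cos R (\<sigma> 0 * t * 0)" using q_sm[OF zero_in t] by blast
  thus ?thesis using cos_zero grpR by simp
qed
lemma sing_sm: "x \<in> CC \<Longrightarrow> q x = R \<Longrightarrow> q (sm x a) = R"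
  using q_sm[of x 0 a] q_R_iff cos_zero grpR by simp

lemma sing_comb: assumes "x \<in> CC" "y \<in> CC" "q x = R" "q y = R"
  shows "q (ad (sm x a) (sm y b)) = cos R (\<sigma> a * f x y * b)"
proof -
  have "0 \<in> q (sm x a)" "0 \<in> q (sm y b)" using sing_sm assms q_R_iff by auto
  hence "q (ad (sm x a) (sm y b)) = cos R (0 + 0 + f (sm x a) (sm y b))"
    using q_add assms by simp
  thus ?thesis using f_sm assms by simp
qed

lemma R_UNIV_triv: "R = UNIV \<Longrightarrow> x \<in> CC \<Longrightarrow> q x = R"
  using q_cos cos_UNIV by metis

lemma sing_f_self: assumes "v \<in> CC" "q v = R" "R \<noteq> UNIV" shows "f v v = 0"
proof (rule zero_if_mult_in[OF _ assms(3)])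
  fix b
  have "q (ad (sm v 1) (sm v b)) = cos R (\<sigma> 1 * f v v * b)" using sing_comb assms by blast
  moreover have "ad (sm v 1) (sm v b) = sm v (1 + b)" using assms by (simp add: distr_s)
  moreover have "q (sm v (1 + b)) = R" using sing_sm assms by blast
  ultimately have "cos R (f v v * b) = R" using sg by simp
  thus "f v v * b \<in> R" using cos_G_iff grpR by blast
qed

lemma sub_sing_f: assumes "subspace W S" "\<forall>l\<in>S. q l = R" "R \<noteq> UNIV" "l \<in> S" "l' \<in> S"
  shows "f l l' = 0"
proof (rule zero_if_mult_in[OF _ assms(3)])
  fix b
  have "S \<subseteq> CC" using assms(1) unfolding subspace_def by blast
  hence C: "l \<in> CC" "l' \<in> CC" using assms by auto
  have "ad (sm l 1) (sm l' b) \<in> S" using assms C unfolding subspace_def by simp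
  hence "q (ad (sm l 1) (sm l' b)) = R" using assms by blast
  moreover have "q (ad (sm l 1) (sm l' b)) = cos R (\<sigma> 1 * f l l' * b)" using sing_comb assms C by blast
  ultimately have "cos R (f l l' * b) = R" using sg by simp
  thus "f l l' * b \<in> R" using cos_G_iff grpR by blast
qed

lemma sing_pt_elem: assumes "P \<in> sing_points W R q" "p \<in> P" shows "q p = R"
proof -
  obtain x where x: "x \<in> CC" "q x = R" "P = span W {x}" using assms unfolding sing_points_def by blast
  then obtain a where "p = sm x a" using assms span1_mem by blast
  thus ?thesis using sing_sm x by simp
qed

lemma sing_line_elem: assumes "L \<in> sing_lines W R q" "l \<in> L" shows "q l = R"
proof -
  have L: "L \<in> lines W" "\<forall>p\<in>points W. p \<subseteq> L \<longrightarrow> p \<in> sing_points W R q"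
    using assms unfolding sing_lines_def by auto
  have lC: "l \<in> CC" using lines_sub L assms by blast
  show ?thesis
  proof (cases "l = zz")
    case True thus ?thesis using q_zero by simp
  next
    case False
    have "span W {l} \<in> points W" unfolding points_def using lC False by blast
    moreover have "span W {l} \<subseteq> L" using span_least lines_subspace L assms by blast
    ultimately have "span W {l} \<in> sing_points W R q" using L by blast
    moreover have "l \<in> span W {l}" using span_inc by blast
    ultimately show ?thesis using sing_pt_elem by blast
  qed
qed

end


locale MT = RVU W U + GQF W \<sigma> \<epsilon> R q f
  for W :: "('v, 'k::division_ring) vs" and U and \<sigma> \<epsilon> R q f +
  assumes U_rad: "U \<subseteq> Radf W f"
    and U_int: "U \<inter> Radq W R q f = {vzero W}"
    and nontriv: "\<not> qtrivial W R q"
begin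

abbreviation "RU \<equiv> R_U U q"
abbreviation "cs \<equiv> coset W U"

lemma R_ne: "R \<noteq> UNIV" using nontriv R_UNIV_triv unfolding qtrivial_def by blast

lemma f_radL: "u \<in> U \<Longrightarrow> y \<in> CC \<Longrightarrow> f u y = 0" using U_rad unfolding Radf_def by auto
lemma f_radR: assumes "u \<in> U" "y \<in> CC" shows "f y u = 0"
proof -
  have "f y u = \<sigma> (f u y) * \<epsilon>" using f_sym[of u y] assms by simp
  thus ?thesis using f_radL assms sg by simp
qed

lemma sing_uniq: assumes "b \<in> CC" "u \<in> U" "q b = R" "q (ad b u) = R" shows "u = zz"
proof -
  obtain s where s: "s \<in> q u" using q_ne assms U_in by blast
  have "q (ad b u) = cos R (0 + s + f b u)" using q_add assms s q_R_iff by simp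
  hence "cos R s = R" using assms f_radR by simp
  hence "s \<in> R" using cos_G_iff grpR by blast
  hence "q u = R" using q_mem[OF U_in[OF assms(2)] s] cos_G_iff[OF grpR] by simp
  hence "u \<in> U \<inter> Radq W R q f" using assms U_rad unfolding Radq_def by blast
  thus ?thesis using U_int by blast
qed

lemma sing_notU: "x \<in> CC \<Longrightarrow> q x = R \<Longrightarrow> x \<noteq> zz \<Longrightarrow> x \<notin> U"
  using sing_uniq[of zz x] q_zero by auto

lemma twice: assumes "u \<in> U" "a \<in> q u" shows "a + a \<in> R"
proof -
  have w: "sm u (-1) \<in> U" "sm u (-1) \<in> CC" using assms by auto
  have "q (sm u (-1)) = cos R (\<sigma> (-1) * a * (-1))" using q_sm assms by simp
  hence "q (sm u (-1)) = cos R a" using sg by simp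
  hence "a \<in> q (sm u (-1))" using cos_self grpR by simp
  hence "q (ad u (sm u (-1))) = cos R (a + a + f u (sm u (-1)))" using q_add assms w by simp
  hence "cos R (a + a) = R" using neg_r f_radL assms w q_zero by simp
  thus ?thesis using cos_G_iff grpR by blast
qed

lemma neg_in: assumes "u \<in> U" "a \<in> q u" shows "- a \<in> q u"
proof -
  have "q u = cos R a" using q_mem assms by simp
  moreover have "- a - a \<in> R" using twice[OF assms] grpR unfolding grp_def
    by (metis minus_add_distrib diff_conv_add_uminus)
  ultimately show ?thesis by (simp add: cos_mem_iff)
qed

lemma RU_q: "u \<in> U \<Longrightarrow> t \<in> q u \<Longrightarrow> t \<in> RU" unfolding R_U_def by blast
lemma R_RU: "R \<subseteq> RU" unfolding R_U_def using q_zero U_z by blast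

lemma closedRU: "closed_sub \<sigma> \<epsilon> RU"
  unfolding closed_sub_def
proof (intro conjI ballI allI)
  show "0 \<in> RU" using R_RU grpR grp_def by blast
  show "Kse \<sigma> \<epsilon> \<subseteq> RU" using closedR R_RU unfolding closed_sub_def by blast
  fix a assume "a \<in> RU"
  then obtain u where u: "u \<in> U" "a \<in> q u" unfolding R_U_def by blast
  show "- a \<in> RU" using neg_in u RU_q by blast
  fix l
  have "q (sm u l) = cos R (\<sigma> l * a * l)" using q_sm u by simp
  hence "\<sigma> l * a * l \<in> q (sm u l)" using cos_self grpR by simp
  thus "\<sigma> l * a * l \<in> RU" using RU_q u U_sm by blast
next
  fix a b assume "a \<in> RU" "b \<in> RU"
  then obtain u v where u: "u \<in> U" "a \<in> q u" "v \<in> U" "b \<in> q v" unfolding R_U_def by blast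
  have "q (ad u v) = cos R (a + b + f u v)" using q_add u by simp
  hence "a + b \<in> q (ad u v)" using cos_self grpR f_radL u by simp
  thus "a + b \<in> RU" using RU_q u U_add by blast
qed

lemma grpRU: "grp RU" using closed_grp closedRU by blast

lemma closedRU_mul: "t \<in> RU \<Longrightarrow> \<sigma> l * t * l \<in> RU" using closedRU unfolding closed_sub_def by blast

lemma qU_coset: assumes "x \<in> CC" "t \<in> q x" shows "q_U U q (cs x) = cos RU t"
proof -
  let ?t = "SOME t'. \<exists>x'\<in>cs x. t' \<in> q x'"
  have "\<exists>t'. \<exists>x'\<in>cs x. t' \<in> q x'" using assms coset_self by blast
  hence "\<exists>x'\<in>cs x. ?t \<in> q x'" by (rule someI_ex)
  then obtain u where u: "u \<in> U" "?t \<in> q (ad x u)" unfolding coset_def by blast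
  obtain s where s: "s \<in> q u" using q_ne u U_in by blast
  have "q (ad x u) = cos R (t + s + f x u)" using q_add assms u s by simp
  hence "q (ad x u) = cos R (t + s)" using u f_radR assms by simp
  hence "?t - (t + s) \<in> R" using u by (simp add: cos_mem_iff)
  hence "?t - (t + s) \<in> RU" using R_RU by blast
  moreover have "s \<in> RU" using RU_q u s by blast
  ultimately have "(?t - (t + s)) + s \<in> RU" using grpRU unfolding grp_def by blast
  moreover have "(?t - (t + s)) + s = ?t - t" by (simp add: algebra_simps)
  ultimately have "?t - t \<in> RU" by simp
  thus ?thesis unfolding q_U_def using cos_eq_iff grpRU by blast
qed

lemma fU_coset: assumes "x \<in> CC" "y \<in> CC" shows "f_U f (cs x) (cs y) = f x y"
proof -
  have "(SOME x'. x' \<in> cs x) \<in> cs x" using assms coset_self by (metis someI_ex)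
  then obtain u where u: "u \<in> U" "(SOME x'. x' \<in> cs x) = ad x u" unfolding coset_def by blast
  have "(SOME y'. y' \<in> cs y) \<in> cs y" using assms coset_self by (metis someI_ex)
  then obtain v where v: "v \<in> U" "(SOME y'. y' \<in> cs y) = ad y v" unfolding coset_def by blast
  have "f (ad x u) (ad y v) = f x y"
    using assms u v by (simp add: f_addl f_addr f_radL f_radR)
  thus ?thesis unfolding f_U_def using u v by simp
qed

lemma lift: assumes "x \<in> CC" "q_U U q (cs x) = RU" shows "\<exists>v\<in>CC. cs v = cs x \<and> q v = R"
proof -
  obtain t where t: "t \<in> q x" using q_ne assms by blast
  have "cos RU t = RU" using qU_coset assms t by simp
  hence "t \<in> RU" using cos_G_iff grpRU by blast
  then obtain u where u: "u \<in> U" "t \<in> q u" unfolding R_U_def by blast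
  have w: "sm u (-1) \<in> U" "sm u (-1) \<in> CC" using u by auto
  have "q (sm u (-1)) = cos R (\<sigma> (-1) * t * (-1))" using q_sm u by simp
  hence "q (sm u (-1)) = cos R t" using sg by simp
  hence "t \<in> q (sm u (-1))" using cos_self grpR by simp
  hence "q (ad x (sm u (-1))) = cos R (t + t + f x (sm u (-1)))" using q_add assms w t by simp
  hence "q (ad x (sm u (-1))) = cos R (t + t)" using f_radR assms w by simp
  hence "q (ad x (sm u (-1))) = R" using twice[OF u] cos_G_iff[OF grpR] by simp
  moreover have "cs (ad x (sm u (-1))) = cs x" using coset_shift assms w by blast
  ultimately show ?thesis using assms w by (metis add_in)
qed


lemma tvs_quot: "trace_valued_sesq (quot W U) \<sigma> \<epsilon> (f_U f)"
  unfolding trace_valued_sesq_def Let_def quot_carrier ball_img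
proof (intro conjI ballI allI)
  fix x y z assume h: "x \<in> CC" "y \<in> CC" "z \<in> CC"
  show "f_U f (vadd (quot W U) (cs x) (cs y)) (cs z) = f_U f (cs x) (cs z) + f_U f (cs y) (cs z)"
    using h by (simp add: coset_add fU_coset f_addl)
  show "f_U f (cs x) (vadd (quot W U) (cs y) (cs z)) = f_U f (cs x) (cs y) + f_U f (cs x) (cs z)"
    using h by (simp add: coset_add fU_coset f_addr)
next
  fix x y a b assume h: "x \<in> CC" "y \<in> CC"
  show "f_U f (vsmul (quot W U) (cs x) a) (vsmul (quot W U) (cs y) b) = \<sigma> a * f_U f (cs x) (cs y) * b"
    using h by (simp add: coset_sm fU_coset f_sm)
next
  fix x y assume h: "x \<in> CC" "y \<in> CC"
  have "f y x = \<sigma> (f x y) * \<epsilon>" using f_sym[OF h] .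
  thus "f_U f (cs y) (cs x) = \<sigma> (f_U f (cs x) (cs y)) * \<epsilon>" using h by (simp add: fU_coset)
next
  fix x assume h: "x \<in> CC"
  show "\<exists>t. f_U f (cs x) (cs x) = t + \<sigma> t * \<epsilon>" using h f_tr by (simp add: fU_coset)
qed

lemma qU_mem: assumes "x \<in> CC" "t \<in> q_U U q (cs x)" shows "\<exists>t0\<in>q x. t - t0 \<in> RU"
proof -
  obtain t0 where t0: "t0 \<in> q x" using q_ne assms by blast
  hence "t \<in> cos RU t0" using qU_coset assms by simp
  thus ?thesis using t0 by (auto simp: cos_mem_iff)
qed

lemma gqf_quot: "gen_quad_form (quot W U) \<sigma> \<epsilon> RU (q_U U q) (f_U f)"
  unfolding gen_quad_form_def
proof (intro conjI)
  show "rvs (quot W U)" by (rule rvs_quot)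
  show "admissible \<sigma> \<epsilon>" by (rule adm)
  show "closed_sub \<sigma> \<epsilon> RU" by (rule closedRU)
  show "trace_valued_sesq (quot W U) \<sigma> \<epsilon> (f_U f)" by (rule tvs_quot)
  show "\<forall>x\<in>vcarrier (quot W U). \<exists>t. q_U U q x = cos RU t" unfolding q_U_def by blast
  show "\<forall>x\<in>vcarrier (quot W U). \<forall>l. \<forall>t\<in>q_U U q x. q_U U q (vsmul (quot W U) x l) = cos RU (\<sigma> l * t * l)"
    unfolding quot_carrier ball_img
  proof (intro ballI allI)
    fix x l t assume h: "x \<in> CC" "t \<in> q_U U q (cs x)"
    obtain t0 where t0: "t0 \<in> q x" "t - t0 \<in> RU" using qU_mem h by blast
    have "q (sm x l) = cos R (\<sigma> l * t0 * l)" using q_sm h t0 by simp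
    hence "\<sigma> l * t0 * l \<in> q (sm x l)" using cos_self grpR by simp
    hence e: "q_U U q (cs (sm x l)) = cos RU (\<sigma> l * t0 * l)" using qU_coset h by simp
    have "t0 - t \<in> RU" using t0 grpRU unfolding grp_def by (metis minus_diff_eq)
    hence "\<sigma> l * (t0 - t) * l \<in> RU" by (rule closedRU_mul)
    moreover have "\<sigma> l * (t0 - t) * l = \<sigma> l * t0 * l - \<sigma> l * t * l" by (simp add: algebra_simps)
    ultimately have "cos RU (\<sigma> l * t0 * l) = cos RU (\<sigma> l * t * l)" using cos_eq_iff[OF grpRU] by simp
    thus "q_U U q (vsmul (quot W U) (cs x) l) = cos RU (\<sigma> l * t * l)" using e h by (simp add: coset_sm)
  qed
  show "\<forall>x\<in>vcarrier (quot W U). \<forall>y\<in>vcarrier (quot W U). \<forall>t\<in>q_U U q x. \<forall>s\<in>q_U U q y.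
        q_U U q (vadd (quot W U) x y) = cos RU (t + s + f_U f x y)"
    unfolding quot_carrier ball_img
  proof (intro ballI)
    fix x y t s assume h: "x \<in> CC" "y \<in> CC" "t \<in> q_U U q (cs x)" "s \<in> q_U U q (cs y)"
    obtain t0 where t0: "t0 \<in> q x" "t - t0 \<in> RU" using qU_mem h by blast
    obtain s0 where s0: "s0 \<in> q y" "s - s0 \<in> RU" using qU_mem h by blast
    have "q (ad x y) = cos R (t0 + s0 + f x y)" using q_add h t0 s0 by simp
    hence "t0 + s0 + f x y \<in> q (ad x y)" using cos_self grpR by simp
    hence e: "q_U U q (cs (ad x y)) = cos RU (t0 + s0 + f x y)" using qU_coset h by simp
    have "- (t - t0) + - (s - s0) \<in> RU" using t0 s0 grpRU unfolding grp_def by blast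
    moreover have "- (t - t0) + - (s - s0) = (t0 + s0 + f x y) - (t + s + f x y)" by (simp add: algebra_simps)
    ultimately have "(t0 + s0 + f x y) - (t + s + f x y) \<in> RU" by metis
    hence "cos RU (t0 + s0 + f x y) = cos RU (t + s + f x y)" using cos_eq_iff[OF grpRU] by blast
    thus "q_U U q (vadd (quot W U) (cs x) (cs y)) = cos RU (t + s + f_U f (cs x) (cs y))"
      using e h by (simp add: coset_add fU_coset)
  qed
qed

end


sublocale MT \<subseteq> Q2: GQF "quot W U" \<sigma> \<epsilon> "R_U U q" "q_U U q" "f_U f"
  by (rule GQF.intro, rule gqf_quot)

context MT
begin

abbreviation "WQ \<equiv> quot W U"
abbreviation "phi \<equiv> (\<lambda>X. cs ` X)"

lemma cs_in: "x \<in> CC \<Longrightarrow> cs x \<in> vcarrier WQ" by simp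

lemma img_span1: assumes "x \<in> CC" shows "cs ` span W {x} = span WQ {cs x}"
proof -
  have "span WQ {cs x} = {vsmul WQ (cs x) a | a. True}" using Q.span1 cs_in assms by blast
  also have "\<dots> = {cs (sm x a) | a. True}" using coset_sm assms by simp
  finally show ?thesis using span1 assms by auto
qed

lemma img_span2: assumes "x \<in> CC" "y \<in> CC" shows "cs ` span W {x, y} = span WQ {cs x, cs y}"
proof -
  have "span WQ {cs x, cs y} = {vadd WQ (vsmul WQ (cs x) a) (vsmul WQ (cs y) b) | a b. True}"
    using Q.span2 cs_in assms by blast
  also have "\<dots> = {cs (ad (sm x a) (sm y b)) | a b. True}" using coset_sm coset_add assms by simp
  finally show ?thesis using span2 assms by auto
qed

lemma sub_lemma: assumes "A \<subseteq> CC" "B \<subseteq> CC" "\<forall>a\<in>A. q a = R" "\<forall>b\<in>B. q b = R" "phi A \<subseteq> phi B"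
  shows "A \<subseteq> B"
proof
  fix a assume a: "a \<in> A"
  then obtain b where b: "b \<in> B" "cs a = cs b" using assms(5) by blast
  have C: "a \<in> CC" "b \<in> CC" using a b assms by auto
  then obtain u where u: "u \<in> U" "a = ad b u" using coset_eq b by blast
  have "u = zz" using sing_uniq[of b u] C u assms a b by simp
  thus "a \<in> B" using u b C by simp
qed

lemma SP_props: assumes "P \<in> sing_points W R q" shows "P \<subseteq> CC \<and> (\<forall>p\<in>P. q p = R)"
proof -
  obtain x where "x \<in> CC" "P = span W {x}" using assms unfolding sing_points_def by blast
  hence "P \<subseteq> CC" using span_in_CC[of "{x}"] by simp
  thus ?thesis using sing_pt_elem[OF assms] by blast
qed

lemma SL_props: assumes "L \<in> sing_lines W R q" shows "L \<subseteq> CC \<and> (\<forall>l\<in>L. q l = R)"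
proof -
  have "L \<in> lines W" using assms unfolding sing_lines_def by blast
  hence "L \<subseteq> CC" by (rule lines_sub)
  thus ?thesis using sing_line_elem[OF assms] by blast
qed

lemma inj_SP: "inj_on phi (sing_points W R q)"
proof (rule inj_onI)
  fix A B assume "A \<in> sing_points W R q" "B \<in> sing_points W R q" "phi A = phi B"
  thus "A = B" using sub_lemma SP_props by (metis equalityI order_refl)
qed

lemma inj_SL: "inj_on phi (sing_lines W R q)"
proof (rule inj_onI)
  fix A B assume "A \<in> sing_lines W R q" "B \<in> sing_lines W R q" "phi A = phi B"
  thus "A = B" using sub_lemma SL_props by (metis equalityI order_refl)
qed

lemma incid: assumes "P \<in> sing_points W R q" "L \<in> sing_lines W R q"
  shows "P \<subseteq> L \<longleftrightarrow> phi P \<subseteq> phi L"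
  using sub_lemma SP_props[OF assms(1)] SL_props[OF assms(2)] by (meson image_mono)

lemma cs_U_iff: "x \<in> CC \<Longrightarrow> cs x = U \<longleftrightarrow> x \<in> U" by (rule coset_is_U)

lemma qU_sing: "x \<in> CC \<Longrightarrow> q x = R \<Longrightarrow> q_U U q (cs x) = RU"
  using qU_coset[of x 0] q_R_iff cos_zero[OF grpRU] by simp

lemma pts_img: "phi ` sing_points W R q = sing_points WQ RU (q_U U q)"
proof
  show "phi ` sing_points W R q \<subseteq> sing_points WQ RU (q_U U q)"
  proof
    fix P' assume "P' \<in> phi ` sing_points W R q"
    then obtain x where x: "x \<in> CC" "x \<noteq> zz" "q x = R" "P' = phi (span W {x})"
      unfolding sing_points_def by blast
    have "cs x \<noteq> U" using sing_notU x cs_U_iff by blast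
    moreover have "P' = span WQ {cs x}" using img_span1 x by simp
    moreover have "q_U U q (cs x) = RU" using qU_sing x by simp
    ultimately show "P' \<in> sing_points WQ RU (q_U U q)" unfolding sing_points_def using x cs_in by auto
  qed
  show "sing_points WQ RU (q_U U q) \<subseteq> phi ` sing_points W R q"
  proof
    fix P' assume "P' \<in> sing_points WQ RU (q_U U q)"
    then obtain C where C: "C \<in> vcarrier WQ" "C \<noteq> U" "q_U U q C = RU" "P' = span WQ {C}"
      unfolding sing_points_def by auto
    then obtain x where x: "x \<in> CC" "C = cs x" by auto
    obtain v where v: "v \<in> CC" "cs v = cs x" "q v = R" using lift x C by blast
    have "v \<noteq> zz" using C v x coset_zero by auto
    hence "span W {v} \<in> sing_points W R q" unfolding sing_points_def using v by blast
    moreover have "phi (span W {v}) = P'" using img_span1 v C x by simp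
    ultimately show "P' \<in> phi ` sing_points W R q" by blast
  qed
qed

lemma line_img_lines: assumes "L \<in> sing_lines W R q"
  obtains x y where "x \<in> CC" "y \<in> CC" "L = span W {x, y}" "phi L \<in> lines WQ"
    "phi L = span WQ {cs x, cs y}"
proof -
  have LL: "L \<in> lines W" using assms unfolding sing_lines_def by blast
  then obtain x y where xy: "x \<in> CC" "y \<in> CC" "x \<noteq> zz" "y \<notin> span W {x}" "L = span W {x, y}"
    unfolding lines_def by blast
  have qL: "\<forall>l\<in>L. q l = R" using SL_props assms by blast
  have "x \<in> L" using span_inc xy by blast
  hence "cs x \<noteq> U" using sing_notU xy qL cs_U_iff by blast
  moreover have "cs y \<notin> span WQ {cs x}"
  proof
    assume "cs y \<in> span WQ {cs x}"
    hence "phi {y} \<subseteq> phi (span W {x})" using img_span1 xy by simp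
    moreover have "y \<in> L" using span_inc xy by blast
    moreover have "\<forall>b\<in>span W {x}. q b = R" using span1 xy sing_sm qL \<open>x \<in> L\<close> by auto
    ultimately have "{y} \<subseteq> span W {x}" using sub_lemma[of "{y}" "span W {x}"] qL xy span_in_CC[of "{x}"] by auto
    thus False using xy by simp
  qed
  ultimately have "span WQ {cs x, cs y} \<in> lines WQ" unfolding lines_def using xy cs_in by auto
  moreover have "phi L = span WQ {cs x, cs y}" using img_span2 xy by simp
  ultimately show ?thesis using that xy by simp
qed

lemma mk_line: assumes "x \<in> CC" "y \<in> CC" "q x = R" "q y = R" "f x y = 0" "cs x \<noteq> U"
    "cs y \<notin> span WQ {cs x}"
  shows "span W {x, y} \<in> sing_lines W R q" "phi (span W {x, y}) = span WQ {cs x, cs y}"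
proof -
  have "x \<noteq> zz" using assms coset_zero by auto
  moreover have "y \<notin> span W {x}"
  proof
    assume "y \<in> span W {x}"
    hence "cs y \<in> phi (span W {x})" by blast
    thus False using img_span1 assms by simp
  qed
  ultimately have L: "span W {x, y} \<in> lines W" unfolding lines_def using assms by blast
  have "\<forall>p\<in>points W. p \<subseteq> span W {x, y} \<longrightarrow> p \<in> sing_points W R q"
  proof (intro ballI impI)
    fix p assume p: "p \<in> points W" "p \<subseteq> span W {x, y}"
    then obtain w where w: "w \<in> CC" "w \<noteq> zz" "p = span W {w}" unfolding points_def by blast
    hence "w \<in> span W {x, y}" using p span_inc by blast
    then obtain a b where "w = ad (sm x a) (sm y b)" using span2_mem assms by blast
    hence "q w = cos R (\<sigma> a * f x y * b)" using sing_comb assms by simp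
    hence "q w = R" using assms cos_zero grpR by simp
    thus "p \<in> sing_points W R q" unfolding sing_points_def using w by blast
  qed
  thus "span W {x, y} \<in> sing_lines W R q" unfolding sing_lines_def using L by blast
  show "phi (span W {x, y}) = span WQ {cs x, cs y}" using img_span2 assms by simp
qed

lemma lines_pre: assumes "L' \<in> lines WQ"
  obtains x y where "x \<in> CC" "y \<in> CC" "cs x \<noteq> U" "cs y \<notin> span WQ {cs x}" "L' = span WQ {cs x, cs y}"
proof -
  obtain C D where "C \<in> vcarrier WQ" "D \<in> vcarrier WQ" "C \<noteq> U" "D \<notin> span WQ {C}" "L' = span WQ {C, D}"
    using assms unfolding lines_def by auto
  thus ?thesis using that by auto
qed

lemma lift_pair: assumes "x \<in> CC" "y \<in> CC" "cs x \<noteq> U" "cs y \<notin> span WQ {cs x}"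
  "q_U U q (cs x) = RU" "q_U U q (cs y) = RU"
  obtains x' y' where "x' \<in> CC" "y' \<in> CC" "cs x' = cs x" "cs y' = cs y" "q x' = R" "q y' = R"
proof -
  obtain x' where "x' \<in> CC" "cs x' = cs x" "q x' = R" using lift assms by blast
  moreover obtain y' where "y' \<in> CC" "cs y' = cs y" "q y' = R" using lift assms by blast
  ultimately show ?thesis using that by blast
qed

end


context MT
begin

lemma RU_ne: assumes "\<not> qtrivial WQ RU (q_U U q)" shows "RU \<noteq> UNIV"
proof
  assume h: "RU = UNIV"
  have "\<forall>X\<in>vcarrier WQ. q_U U q X = RU" unfolding q_U_def h cos_UNIV by simp
  thus False using assms unfolding qtrivial_def by blast
qed

lemma SL_img_sub: assumes "L \<in> sing_lines W R q"
  shows "\<forall>p\<in>points WQ. p \<subseteq> phi L \<longrightarrow> p \<in> sing_points WQ RU (q_U U q)"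
proof (intro ballI impI)
  fix p assume p: "p \<in> points WQ" "p \<subseteq> phi L"
  then obtain C where C: "C \<in> vcarrier WQ" "C \<noteq> vzero WQ" "p = span WQ {C}" unfolding points_def by blast
  hence "C \<in> phi L" using Q.span_inc p by blast
  then obtain l where l: "l \<in> L" "C = cs l" by blast
  have "l \<in> CC" "q l = R" using SL_props assms l by auto
  hence "q_U U q C = RU" using qU_sing l by simp
  thus "p \<in> sing_points WQ RU (q_U U q)" unfolding sing_points_def using C by blast
qed


lemma case1: assumes nt: "\<not> qtrivial WQ RU (q_U U q)"
  shows "geom_iso phi (S_q W R q) (S_q WQ RU (q_U U q))"
proof -
  have lines_eq: "phi ` sing_lines W R q = sing_lines WQ RU (q_U U q)"
  proof
    show "phi ` sing_lines W R q \<subseteq> sing_lines WQ RU (q_U U q)"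
    proof
      fix L' assume "L' \<in> phi ` sing_lines W R q"
      then obtain L where L: "L \<in> sing_lines W R q" "L' = phi L" by blast
      obtain x y where "phi L \<in> lines WQ" using line_img_lines[OF L(1)] by blast
      thus "L' \<in> sing_lines WQ RU (q_U U q)" unfolding sing_lines_def using SL_img_sub[OF L(1)] L by blast
    qed
    show "sing_lines WQ RU (q_U U q) \<subseteq> phi ` sing_lines W R q"
    proof
      fix L' assume L': "L' \<in> sing_lines WQ RU (q_U U q)"
      hence "L' \<in> lines WQ" unfolding sing_lines_def by blast
      then obtain x y where xy: "x \<in> CC" "y \<in> CC" "cs x \<noteq> U" "cs y \<notin> span WQ {cs x}"
        "L' = span WQ {cs x, cs y}" by (rule lines_pre)
      have "{cs x, cs y} \<subseteq> L'" using xy(5) Q.span_inc by simp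
      hence "cs x \<in> L'" "cs y \<in> L'" by auto
      hence "q_U U q (cs x) = RU" "q_U U q (cs y) = RU" using Q2.sing_line_elem L' by auto
      then obtain x' y' where xy': "x' \<in> CC" "y' \<in> CC" "cs x' = cs x" "cs y' = cs y" "q x' = R" "q y' = R"
        using lift_pair[OF xy(1) xy(2) xy(3) xy(4)] by blast
      have L'eq: "L' = span WQ {cs x', cs y'}" using xy(5) xy'(3,4) by simp
      have "f x' y' = 0"
      proof (rule zero_if_mult_in[OF _ RU_ne[OF nt]])
        fix b
        let ?w = "ad (sm x' 1) (sm y' b)"
        have wC: "?w \<in> CC" using xy' by simp
        have "cs ?w = vadd WQ (vsmul WQ (cs x') 1) (vsmul WQ (cs y') b)" by (simp only: coset_sm[OF xy'(1)] coset_sm[OF xy'(2)] coset_add[OF sm_in[OF xy'(1)] sm_in[OF xy'(2)]])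
        hence "cs ?w \<in> span WQ {cs x', cs y'}" using Q.span2_mem[OF cs_in[OF xy'(1)] cs_in[OF xy'(2)]] by blast
        hence "cs ?w \<in> L'" using L'eq by simp
        hence "q_U U q (cs ?w) = RU" using Q2.sing_line_elem L' by blast
        moreover have "q ?w = cos R (\<sigma> 1 * f x' y' * b)" using sing_comb xy' by blast
        hence "f x' y' * b \<in> q ?w" using sg cos_self grpR by simp
        hence "q_U U q (cs ?w) = cos RU (f x' y' * b)" using qU_coset wC by blast
        ultimately show "f x' y' * b \<in> RU" using cos_G_iff grpRU by metis
      qed
      moreover have "cs x' \<noteq> U" using xy(3) xy'(3) by simp
      moreover have "cs y' \<notin> span WQ {cs x'}" using xy(4) xy'(3,4) by simp
      ultimately have "span W {x', y'} \<in> sing_lines W R q" "phi (span W {x', y'}) = span WQ {cs x', cs y'}"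
        using mk_line[OF xy'(1) xy'(2) xy'(5) xy'(6)] by blast+
      thus "L' \<in> phi ` sing_lines W R q" using L'eq by (metis image_eqI)
    qed
  qed
  show ?thesis unfolding geom_iso_def S_q_def fst_conv snd_conv bij_betw_def
  proof (intro conjI ballI)
    show "inj_on phi (sing_points W R q)" by (rule inj_SP)
    show "phi ` sing_points W R q = sing_points WQ RU (q_U U q)" by (rule pts_img)
    show "inj_on phi (sing_lines W R q)" by (rule inj_SL)
    show "phi ` sing_lines W R q = sing_lines WQ RU (q_U U q)" by (rule lines_eq)
    fix p L assume "p \<in> sing_points W R q" "L \<in> sing_lines W R q"
    thus "(p \<subseteq> L) = (phi p \<subseteq> phi L)" by (rule incid)
  qed
qed

lemma alt_W: assumes tr: "qtrivial WQ RU (q_U U q)" shows "alternating W f"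
  unfolding alternating_def
proof
  fix x assume x: "x \<in> CC"
  have "q_U U q (cs x) = RU" using tr x unfolding qtrivial_def by simp
  then obtain v where v: "v \<in> CC" "cs v = cs x" "q v = R" using lift x by blast
  then obtain u where u: "u \<in> U" "x = ad v u" using coset_eq x by metis
  have "f x x = f v v" using u v by (simp add: f_addl f_addr f_radL f_radR)
  thus "f x x = 0" using sing_f_self v R_ne by simp
qed

lemma case2: assumes tr: "qtrivial WQ RU (q_U U q)"
  shows "alternating W f \<and> alternating WQ (f_U f) \<and> geom_iso phi (S_q W R q) (S_f WQ (f_U f))"
proof -
  have aW: "alternating W f" by (rule alt_W[OF tr])
  have aQ: "alternating WQ (f_U f)" unfolding alternating_def quot_carrier ball_img
    using aW fU_coset unfolding alternating_def by simp
  have trv: "\<And>C. C \<in> vcarrier WQ \<Longrightarrow> q_U U q C = RU" using tr unfolding qtrivial_def by blast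
  have aQ': "\<And>C. C \<in> vcarrier WQ \<Longrightarrow> f_U f C C = 0" using aQ unfolding alternating_def by blast
  have pts_eq: "fst (S_f WQ (f_U f)) = sing_points WQ RU (q_U U q)"
    unfolding S_f_def sing_points_def fst_conv using trv aQ' by metis
  have lines_eq: "phi ` sing_lines W R q = snd (S_f WQ (f_U f))"
    unfolding S_f_def snd_conv
  proof
    show "phi ` sing_lines W R q \<subseteq> {L \<in> lines WQ. \<forall>x\<in>L. \<forall>y\<in>L. f_U f x y = 0}"
    proof
      fix L' assume "L' \<in> phi ` sing_lines W R q"
      then obtain L where L: "L \<in> sing_lines W R q" "L' = phi L" by blast
      obtain x y where "phi L \<in> lines WQ" using line_img_lines[OF L(1)] by blast
      moreover have "\<forall>X\<in>phi L. \<forall>Y\<in>phi L. f_U f X Y = 0"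
      proof (intro ballI)
        fix X Y assume "X \<in> phi L" "Y \<in> phi L"
        then obtain l l' where ll: "l \<in> L" "l' \<in> L" "X = cs l" "Y = cs l'" by blast
        have LL: "L \<in> lines W" using L unfolding sing_lines_def by blast
        have "l \<in> CC" "l' \<in> CC" using ll lines_sub LL by auto
        moreover have "f l l' = 0" using sub_sing_f[OF lines_subspace[OF LL]] SL_props[OF L(1)] R_ne ll by blast
        ultimately show "f_U f X Y = 0" using ll fU_coset by simp
      qed
      ultimately show "L' \<in> {L \<in> lines WQ. \<forall>x\<in>L. \<forall>y\<in>L. f_U f x y = 0}" using L by blast
    qed
    show "{L \<in> lines WQ. \<forall>x\<in>L. \<forall>y\<in>L. f_U f x y = 0} \<subseteq> phi ` sing_lines W R q"
    proof
      fix L' assume L': "L' \<in> {L \<in> lines WQ. \<forall>x\<in>L. \<forall>y\<in>L. f_U f x y = 0}"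
      hence "L' \<in> lines WQ" by blast
      then obtain x y where xy: "x \<in> CC" "y \<in> CC" "cs x \<noteq> U" "cs y \<notin> span WQ {cs x}"
        "L' = span WQ {cs x, cs y}" by (rule lines_pre)
      have "{cs x, cs y} \<subseteq> L'" using xy(5) Q.span_inc by simp
      hence inL: "cs x \<in> L'" "cs y \<in> L'" by auto
      have "q_U U q (cs x) = RU" "q_U U q (cs y) = RU" using trv xy by auto
      then obtain x' y' where xy': "x' \<in> CC" "y' \<in> CC" "cs x' = cs x" "cs y' = cs y" "q x' = R" "q y' = R"
        using lift_pair[OF xy(1) xy(2) xy(3) xy(4)] by blast
      have L'eq: "L' = span WQ {cs x', cs y'}" using xy(5) xy'(3,4) by simp
      have "f_U f (cs x) (cs y) = 0" using L' inL by blast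
      hence "f x' y' = 0" using fU_coset xy' by metis
      moreover have "cs x' \<noteq> U" using xy(3) xy'(3) by simp
      moreover have "cs y' \<notin> span WQ {cs x'}" using xy(4) xy'(3,4) by simp
      ultimately have "span W {x', y'} \<in> sing_lines W R q" "phi (span W {x', y'}) = span WQ {cs x', cs y'}"
        using mk_line[OF xy'(1) xy'(2) xy'(5) xy'(6)] by blast+
      thus "L' \<in> phi ` sing_lines W R q" using L'eq by (metis image_eqI)
    qed
  qed
  have "geom_iso phi (S_q W R q) (S_f WQ (f_U f))"
    unfolding geom_iso_def S_q_def fst_conv snd_conv bij_betw_def
  proof (intro conjI ballI)
    show "inj_on phi (sing_points W R q)" by (rule inj_SP)
    show "phi ` sing_points W R q = fst (S_f WQ (f_U f))" using pts_img pts_eq by simp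
    show "inj_on phi (sing_lines W R q)" by (rule inj_SL)
    show "phi ` sing_lines W R q = snd (S_f WQ (f_U f))" by (rule lines_eq)
    fix p L assume "p \<in> sing_points W R q" "L \<in> sing_lines W R q"
    thus "(p \<subseteq> L) = (phi p \<subseteq> phi L)" by (rule incid)
  qed
  thus ?thesis using aW aQ by blast
qed

end

theorem mainTheorem14:
  fixes W :: "('v, 'k::division_ring) vs"
    and \<sigma> :: "'k \<Rightarrow> 'k" and \<epsilon> :: 'k and R :: "'k set"
    and q :: "'v \<Rightarrow> 'k set" and f :: "'v \<Rightarrow> 'v \<Rightarrow> 'k" and U :: "'v set"
  assumes gqf: "gen_quad_form W \<sigma> \<epsilon> R q f"
    and nontriv: "\<not> qtrivial W R q"
    and spans: "span W (\<Union> (sing_points W R q)) = vcarrier W"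
    and U_sub: "subspace W U"
    and U_rad: "U \<subseteq> Radf W f"
    and U_int: "U \<inter> Radq W R q f = {vzero W}"
  shows "(\<forall>x\<in>vcarrier W. \<forall>t\<in>q x. q_U U q (coset W U x) = cos (R_U U q) t)
       \<and> (\<forall>x\<in>vcarrier W. \<forall>y\<in>vcarrier W. f_U f (coset W U x) (coset W U y) = f x y)
       \<and> gen_quad_form (quot W U) \<sigma> \<epsilon> (R_U U q) (q_U U q) (f_U f)
       \<and> (\<not> qtrivial (quot W U) (R_U U q) (q_U U q) \<longrightarrow>
            geom_iso (\<lambda>X. coset W U ` X) (S_q W R q) (S_q (quot W U) (R_U U q) (q_U U q)))
       \<and> (qtrivial (quot W U) (R_U U q) (q_U U q) \<longrightarrow>
            alternating W f \<and> alternating (quot W U) (f_U f) \<and>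
            geom_iso (\<lambda>X. coset W U ` X) (S_q W R q) (S_f (quot W U) (f_U f)))"
proof -
  interpret GQF W \<sigma> \<epsilon> R q f by (rule GQF.intro, rule gqf)
  interpret M: MT W U \<sigma> \<epsilon> R q f
    by (intro MT.intro RVU.intro RVU_axioms.intro MT_axioms.intro GQF.intro RV.intro rvsW U_sub U_rad U_int nontriv gqf)
  show ?thesis using M.qU_coset M.fU_coset M.gqf_quot M.case1 M.case2 by blast
qed

end
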